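(* For $\varsigma\in[\tfrac14,\tfrac12]$ and $\nu\in(0,1)$ let $$\hat M(\varsigma,\nu):=\begin{pmatrix}-\frac23\varsigma\log^3\nu+\frac12 & -\nu & \frac12\nu^2\\ -\nu & -\frac23(1-2\varsigma)\log^3\nu+2(1+\log\nu) & -\nu\\ \frac12\nu^2 & -\nu & -\frac23\varsigma\log^3\nu+\frac12\end{pmatrix}.$$ Two of the three eigenvalues of $\hat M(\varsigma,\nu)$ are nonnegative for all $\nu\in(0,1)$ and $\varsigma\in[\tfrac14,\tfrac12]$. The third eigenvalue is $E_3(\varsigma,\nu):=\frac1{12}\big(e_1(\varsigma,\nu)-\sqrt{e_2(\varsigma,\nu)}\big)$, where $$e_1=15+3\nu^2+(12-4\log^2\nu+4\varsigma\log^2\nu)\log\nu,$$ $$\begin{aligned}e_2=\;&81+234\nu^2+9\nu^4+216\log\nu-72\nu^2\log\nu+144\log^2\nu-72\log^3\nu+24\nu^2\log^3\nu-96\log^4\nu+16\log^6\nu\\&+(216\log^3\nu-72\nu^2\log^3\nu+288\log^4\nu-96\log^6\nu)\varsigma+144\log^6\nu\,\varsigma^2,\end{aligned}$$ and $E_3(\varsigma,\nu)\ge0$ if and only if $\varsigma\le\varsigma_2(\nu)$, where $$\varsigma_2(\nu):=\frac{1}{16\log^6\nu}\big(f(\nu)+\sqrt{g(\nu)}\big),\quad f(\nu):=\big(6(-1+\nu^2)+4(-3+\log^2\nu)\log\nu\big)\log^3\nu,$$ $$g(\nu):=96\log^6\nu\big(3(1-\nu^2)+3(1+\nu^2)\l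og\nu-(1+\nu^2)\log^3\nu\big)+\big(6(-1+\nu^2)\log^3\nu+4(\log^2\nu-3)\log^4\nu\big)^2.$$
   Context: This is the case $c_u=c_v$ for the monolayer: with $c_0,c_u,c_v\ge0$ not all zero, $\varsigma=\frac{c_v+c_0}{2(c_0+c_u+c_v)}$ and $\nu=e^{-2\pi\delta_m/L}$, $\delta_m=(\tfrac32(c_0+c_u+c_v))^{1/3}$; the assumption $c_u=c_v$ forces $\varsigma\in[\tfrac14,\tfrac12]$. The matrix $\hat M$ represents (up to the factor $L/\pi$) the first Fourier mode of the second variation of the energy at the monolayer. *)

theory Defs
  imports "HOL-Analysis.Analysis"
begin

text \<open>Here log denotes the natural logarithm ln.\<close>

definition Mhat :: "real \<Rightarrow> real \<Rightarrow> real^3^3" where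
  "Mhat s v = vector [
     vector [- (2/3) * s * (ln v) ^ 3 + 1/2, -v, (1/2) * v ^ 2],
     vector [-v, - (2/3) * (1 - 2 * s) * (ln v) ^ 3 + 2 * (1 + ln v), -v],
     vector [(1/2) * v ^ 2, -v, - (2/3) * s * (ln v) ^ 3 + 1/2]]"

definition charpoly3 :: "real^3^3 \<Rightarrow> real \<Rightarrow> real" where
  "charpoly3 A x = det (x *\<^sub>R mat 1 - A)"

definition e1 :: "real \<Rightarrow> real \<Rightarrow> real" where
  "e1 s v = 15 + 3 * v^2 + (12 - 4 * (ln v)^2 + 4 * s * (ln v)^2) * ln v"

definition e2 :: "real \<Rightarrow> real \<Rightarrow> real" where
  "e2 s v = 81 + 234 * v^2 + 9 * v^4 + 216 * ln v - 72 * v^2 * ln v + 144 * (ln v)^2 - 72 * (ln v)^3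
      + 24 * v^2 * (ln v)^3 - 96 * (ln v)^4 + 16 * (ln v)^6
      + (216 * (ln v)^3 - 72 * v^2 * (ln v)^3 + 288 * (ln v)^4 - 96 * (ln v)^6) * s
      + 144 * (ln v)^6 * s^2"

definition E3 :: "real \<Rightarrow> real \<Rightarrow> real" where
  "E3 s v = (1/12) * (e1 s v - sqrt (e2 s v))"

definition f_aux :: "real \<Rightarrow> real" where
  "f_aux v = (6 * (-1 + v^2) + 4 * (-3 + (ln v)^2) * ln v) * (ln v)^3"

definition g_aux :: "real \<Rightarrow> real" where
  "g_aux v = 96 * (ln v)^6 * (3 * (1 - v^2) + 3 * (1 + v^2) * ln v - (1 + v^2) * (ln v)^3)
      + (6 * (-1 + v^2) * (ln v)^3 + 4 * ((ln v)^2 - 3) * (ln v)^4)^2"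

definition varsigma2 :: "real \<Rightarrow> real" where
  "varsigma2 v = (1 / (16 * (ln v)^6)) * (f_aux v + sqrt (g_aux v))"

end

theory Submission
  imports Defs
begin

lemma cp_expand:
  "charpoly3 (Mhat s v) x =
    (x - (- (2/3) * s * (ln v) ^ 3 + 1/2)) * (x - (- (2/3) * (1 - 2 * s) * (ln v) ^ 3 + 2 * (1 + ln v))) * (x - (- (2/3) * s * (ln v) ^ 3 + 1/2))
    - 2 * v * v * (v^2/2)
    - 2 * (x - (- (2/3) * s * (ln v) ^ 3 + 1/2)) * v * v
    - (v^2/2) * (x - (- (2/3) * (1 - 2 * s) * (ln v) ^ 3 + 2 * (1 + ln v))) * (v^2/2)"
  unfolding charpoly3_def Mhat_def det_3
  by (simp add: vector_def mat_def algebra_simps)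

lemma id_e1: fixes L s v a b c :: real
 assumes "a = - (2/3) * s * L ^ 3 + 1/2" "b = - (2/3) * (1 - 2 * s) * L ^ 3 + 2 * (1 + L)" "c = v^2/2"
 shows "15 + 3 * v^2 + (12 - 4 * L^2 + 4 * s * L^2) * L = 6 * (a + b + c)"
  unfolding assms by (simp add: field_simps power2_eq_square power3_eq_cube)

lemma id_e2: fixes L s v a b c :: real
 assumes "a = - (2/3) * s * L ^ 3 + 1/2" "b = - (2/3) * (1 - 2 * s) * L ^ 3 + 2 * (1 + L)" "c = v^2/2"
 shows
 "81 + 234 * v^2 + 9 * v^4 + 216 * L - 72 * v^2 * L + 144 * L^2 - 72 * L^3
      + 24 * v^2 * L^3 - 96 * L^4 + 16 * L^6
      + (216 * L^3 - 72 * v^2 * L^3 + 288 * L^4 - 96 * L^6) * s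
      + 144 * L^6 * s^2 = 36 * ((a + c - b)^2 + 8 * v^2)"
  unfolding assms by (simp add: field_simps power2_eq_square power3_eq_cube) algebra

lemma id_key: fixes L s v a b c :: real
 assumes "a = - (2/3) * s * L ^ 3 + 1/2" "b = - (2/3) * (1 - 2 * s) * L ^ 3 + 2 * (1 + L)" "c = v^2/2"
 shows
 "-288 * L^6 * ((a + c) * b - 2 * v^2)
  = (16 * L^6 * s - (6 * (-1 + v^2) + 4 * (-3 + L^2) * L) * L^3)^2 -
   (96 * L^6 * (3 * (1 - v^2) + 3 * (1 + v^2) * L - (1 + v^2) * L^3)
      + (6 * (-1 + v^2) * L^3 + 4 * (L^2 - 3) * L^4)^2)"
  unfolding assms by (simp add: field_simps power2_eq_square power3_eq_cube) algebra

lemma id_w: fixes L s v :: real shows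
 "16 * L^6 * s - (6 * (-1 + v^2) + 4 * (-3 + L^2) * L) * L^3 = 4 * L^6 * (4 * s - 1) + 6 * L^3 * (1 - v^2 + 2 * L)"
  by algebra

lemma id_fac: fixes a b c v x l2 E q e1 :: real
  assumes "e1 = 6 * (a + b + c)" "q^2 = 36 * ((a + c - b)^2 + 8 * v^2)" "c = v^2/2"
    "l2 = (e1 + q)/12" "E = (e1 - q)/12"
  shows "(x - a) * (x - b) * (x - a) - 2 * v * v * (v^2/2) - 2 * (x - a) * v * v - (v^2/2) * (x - b) * (v^2/2)
     = (x - (a - c)) * (x - l2) * (x - E)"
proof -
  have "(x - l2) * (x - E) = x^2 - e1 * x / 6 + (e1^2 - q^2)/144"
    unfolding assms(4,5) by (simp add: field_simps power2_eq_square)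
  also have "\<dots> = x^2 - (a + b + c) * x + (a + c) * b - 2 * v^2"
    unfolding assms(1,2) by (simp add: field_simps power2_eq_square)
  finally have h: "(x - l2) * (x - E) = x^2 - (a + b + c) * x + (a + c) * b - 2 * v^2" .
  show ?thesis unfolding mult.assoc[of "x - (a - c)"] h using assms(3)
    by (simp add: field_simps power2_eq_square) algebra
qed

theorem lemma4p12:
  fixes s v :: real
  assumes "1/4 \<le> s" "s \<le> 1/2" "0 < v" "v < 1"
  shows "(\<exists>l1 l2. 0 \<le> l1 \<and> 0 \<le> l2 \<and>
            (\<forall>x. charpoly3 (Mhat s v) x = (x - l1) * (x - l2) * (x - E3 s v)))
         \<and> (0 \<le> E3 s v \<longleftrightarrow> s \<le> varsigma2 v)"
proof -
  define L where "L = ln v"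
  have vL: "v = exp L" using assms by (simp add: L_def)
  have L0: "L < 0" using assms by (simp add: L_def)
  have vsq: "1 + 2 * L < v^2"
  proof (cases "1 + L \<ge> 0")
    case True
    have "1 + L \<le> v" using vL by simp
    hence "(1 + L)^2 \<le> v^2" using True by (intro power_mono) auto
    moreover have "0 < L^2" using L0 by simp
    ultimately show ?thesis by (simp add: power2_eq_square algebra_simps)
  next
    case False
    have "0 < v^2" using assms by simp
    thus ?thesis using False by linarith
  qed
  define a where "a = - (2/3) * s * L ^ 3 + 1/2"
  define b where "b = - (2/3) * (1 - 2 * s) * L ^ 3 + 2 * (1 + L)"
  define c where "c = v^2/2"
  have e1: "e1 s v = 6 * (a + b + c)" unfolding e1_def L_def[symmetric]
    by (rule id_e1[OF a_def b_def c_def])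
  have e2: "e2 s v = 36 * ((a + c - b)^2 + 8 * v^2)" unfolding e2_def L_def[symmetric]
    by (rule id_e2[OF a_def b_def c_def])
  have e2pos: "0 \<le> e2 s v" unfolding e2 by simp
  have e1pos: "0 < e1 s v"
  proof -
    define u where "u = -L"
    have u0: "0 < u" using L0 u_def by simp
    have "e1 s v = 15 + 3 * v^2 - 12 * u + 4 * (1 - s) * u^3" unfolding e1_def L_def[symmetric] u_def
      by (simp add: algebra_simps power2_eq_square power3_eq_cube)
    moreover have "2 * u^3 \<le> 4 * (1 - s) * u^3" using assms(2) u0 by (simp add: mult_right_mono)
    moreover have "0 < 15 - 12 * u + 2 * u^3"
    proof -
      have "15 - 12 * u + 2 * u^3 = 2 * (u - 3/2)^2 * (u + 3) + (3/2) * u + 3/2"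
        by (simp add: field_simps power2_eq_square power3_eq_cube)
      moreover have "0 \<le> 2 * (u - 3/2)^2 * (u + 3)" using u0 by simp
      ultimately show ?thesis using u0 by linarith
    qed
    moreover have "0 \<le> 3 * v^2" by simp
    ultimately show ?thesis by linarith
  qed
  define q where "q = sqrt (e2 s v)"
  have q2: "q^2 = e2 s v" unfolding q_def using e2pos by simp
  have q0: "0 \<le> q" unfolding q_def using e2pos by simp
  have E3: "E3 s v = (e1 s v - q)/12" unfolding E3_def q_def by simp
  define l1 where "l1 = a - c"
  define l2 where "l2 = (e1 s v + q)/12"
  have l1pos: "0 \<le> l1"
  proof -
    have "0 \<le> - (2/3) * s * L ^ 3" using L0 assms(1)
      by (simp add: mult_nonneg_nonpos zero_le_mult_iff power3_eq_cube)
    moreover have "v^2 \<le> 1" using assms by (simp add: power_le_one)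
    ultimately show ?thesis unfolding l1_def a_def c_def by linarith
  qed
  have l2pos: "0 \<le> l2" unfolding l2_def using e1pos q0 by simp
  have fac: "charpoly3 (Mhat s v) x = (x - l1) * (x - l2) * (x - E3 s v)" for x
    unfolding cp_expand L_def[symmetric] a_def[symmetric] b_def[symmetric] l1_def
    by (rule id_fac[OF e1 _ c_def l2_def E3]) (simp add: q2 e2)
  have part1: "\<exists>l1 l2. 0 \<le> l1 \<and> 0 \<le> l2 \<and>
            (\<forall>x. charpoly3 (Mhat s v) x = (x - l1) * (x - l2) * (x - E3 s v))"
    using l1pos l2pos fac by blast
  define P where "P = (a + c) * b - 2 * v^2"
  have iff1: "0 \<le> E3 s v \<longleftrightarrow> 0 \<le> P"
  proof -
    have "0 \<le> E3 s v \<longleftrightarrow> q \<le> e1 s v" unfolding E3 by simp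
    also have "\<dots> \<longleftrightarrow> q^2 \<le> (e1 s v)^2" using q0 e1pos
      by (simp add: abs_le_square_iff[symmetric])
    also have "\<dots> \<longleftrightarrow> 0 \<le> P"
    proof -
      have "(e1 s v)^2 - e2 s v = 144 * P" unfolding e1 e2 P_def c_def
        by (simp add: field_simps power2_eq_square)
      thus ?thesis unfolding q2 by linarith
    qed
    finally show ?thesis .
  qed
  define D where "D = L^6"
  have D0: "0 < D" unfolding D_def using L0 by simp
  define w where "w = 16 * D * s - f_aux v"
  have wpos: "0 < w"
  proof -
    have "w = 4 * L^6 * (4 * s - 1) + 6 * L^3 * (1 - v^2 + 2 * L)"
      unfolding w_def D_def f_aux_def L_def[symmetric] by (rule id_w)
    moreover have "0 \<le> 4 * L^6 * (4 * s - 1)" using assms(1) by simp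
    moreover have "0 < 6 * L^3 * (1 - v^2 + 2 * L)"
    proof -
      have "L^3 < 0" using L0 by (simp add: power_less_zero_eq)
      moreover have "1 - v^2 + 2 * L < 0" using vsq by linarith
      ultimately show ?thesis by (simp add: mult_neg_neg)
    qed
    ultimately show ?thesis by linarith
  qed
  have keyid: "-288 * D * P = w^2 - g_aux v"
    unfolding P_def D_def w_def f_aux_def g_aux_def L_def[symmetric]
    by (rule id_key[OF a_def b_def c_def])
  have iff2: "0 \<le> P \<longleftrightarrow> w^2 \<le> g_aux v"
  proof -
    have "0 \<le> P \<longleftrightarrow> -288 * D * P \<le> 0" using D0 by (simp add: mult_le_0_iff zero_le_mult_iff)
    thus ?thesis unfolding keyid by simp
  qed
  have iff3: "s \<le> varsigma2 v \<longleftrightarrow> w \<le> sqrt (g_aux v)"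
  proof -
    have "s \<le> varsigma2 v \<longleftrightarrow> 16 * D * s \<le> f_aux v + sqrt (g_aux v)"
      unfolding varsigma2_def D_def[symmetric] L_def[symmetric] using D0
      by (simp add: field_simps)
    thus ?thesis unfolding w_def by linarith
  qed
  have iff4: "w \<le> sqrt (g_aux v) \<longleftrightarrow> w^2 \<le> g_aux v"
    using wpos real_le_rsqrt real_sqrt_le_iff
    by (metis less_eq_real_def real_sqrt_pow2_iff real_sqrt_unique sqrt_le_D)
  show ?thesis using part1 iff1 iff2 iff3 iff4 by blast
qed

end
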